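(* Let $m$ be any even number of machines and consider any distributed optimization algorithm satisfying Assumption 1 (non-smooth version). Let $\lambda\ge0$. Then, for $d$ sufficiently large, there exist two convex functions $F_1,F_2$ on the unit Euclidean ball $\{\mathbf w\in\mathbb R^d:\|\mathbf w\|\le1\}$ with the following properties: - each is $\lambda$-strongly convex and $(1+\lambda)$-Lipschitz; - if $m/2$ machines hold $F_1$ and $m/2$ hold $F_2$, set $F=\frac12(F_1+F_2)$ and $\mathbf w^*=\arg\min_{\|\mathbf w\|\le1}F(\mathbf w)$. Then, for every sufficiently small $\epsilon>0$, the number of communication rounds required to obtain $\hat{\mathbf w}$ with $F(\hat{\mathbf w})-F(\mathbf w^* )\le\epsilon$ is at least $\frac{1}{8\epsilon}-2$ if $\lambda=0$, and at least $\sqrt{\frac{1}{16\lambda\epsilon}}-2$ if $\lambda>0$.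
   Context: Distributed model: there are $m$ machines; machine $i$ holds a convex function $F_i$, and the goal is to minimize the average $F=\frac1m\sum_iF_i$. The algorithm proceeds in rounds. In each round every machine performs arbitrary (unbounded) local computation. This is followed by a communication round in which each machine broadcasts a message to all other machines. After the last communication round, a designated machine outputs a point $\hat{\mathbf w}$. Assumption 1 (non-smooth version): Each machine $j$ maintains a set $W_j\subset\mathbb R^d$, initially $W_j=\{\mathbf 0\}$. Between communication rounds, machine $j$ may iteratively add to $W_j$ finitely many points $\mathbf w$. Each such point must satisfy, for some subgradient $\mathbf g\in\partial F_j(\mathbf w)$ and some $\gamma,\nu\ge0$ with $\gamma+\nu>0$, $$\gamma\mathbf w+\nu\mathbf g\in\operatorname{span}\{\mathbf w',\ \mathbf g',\ (\nabla^2F_j(\mathbf w')+D)\mathbf w'',\ (\nabla^2F_j(\mathbf w')+D)^{-1}\mathbf w''\},$$ where the span ranges over $\mathbf w',\mathbf w''\in W_j$, subgradients $\mathbf g'\in\partial F_j(\mathbf w')$, and diagonal matrices $D$ such that $\nabla^2F_j(\mathbf w')$ and $(\nabla^2F_j(\mathbf w')+D)^{-1}$ exist. After every communication round, every $W_j$ is replaced by $\bigcup_{i=1}^mW_i$. The final output of the designated machine $j$ is a point in $\operatorname{span}W_j$. *)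

theory Defs
  imports Complex_Main
begin

text \<open>Vectors of R^d are represented as functions nat => real vanishing at
  indices >= d; d x d matrices as nat => nat => real vanishing outside d x d.\<close>

type_synonym vec = "nat \<Rightarrow> real"
type_synonym mat = "nat \<Rightarrow> nat \<Rightarrow> real"

definition Rd :: "nat \<Rightarrow> vec set" where
  "Rd d = {x. \<forall>i. d \<le> i \<longrightarrow> x i = 0}"

definition ipd :: "nat \<Rightarrow> vec \<Rightarrow> vec \<Rightarrow> real" where
  "ipd d x y = (\<Sum>i<d. x i * y i)"

definition nrmd :: "nat \<Rightarrow> vec \<Rightarrow> real" where
  "nrmd d x = sqrt (ipd d x x)"

definition vsub :: "vec \<Rightarrow> vec \<Rightarrow> vec" where
  "vsub x y = (\<lambda>i. x i - y i)"

definition Bd :: "nat \<Rightarrow> vec set" where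
  "Bd d = {x \<in> Rd d. nrmd d x \<le> 1}"

definition strongly_convex_on_ball :: "nat \<Rightarrow> real \<Rightarrow> (vec \<Rightarrow> real) \<Rightarrow> bool" where
  "strongly_convex_on_ball d lam F \<longleftrightarrow>
     (\<forall>x\<in>Bd d. \<forall>y\<in>Bd d. \<forall>t::real. 0 \<le> t \<and> t \<le> 1 \<longrightarrow>
        F (\<lambda>i. t * x i + (1 - t) * y i)
          \<le> t * F x + (1 - t) * F y - lam / 2 * t * (1 - t) * (nrmd d (vsub x y))\<^sup>2)"

definition lipschitz_on_ball :: "nat \<Rightarrow> real \<Rightarrow> (vec \<Rightarrow> real) \<Rightarrow> bool" where
  "lipschitz_on_ball d L F \<longleftrightarrow>
     (\<forall>x\<in>Bd d. \<forall>y\<in>Bd d. \<bar>F x - F y\<bar> \<le> L * nrmd d (vsub x y))"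

definition subgrad :: "nat \<Rightarrow> (vec \<Rightarrow> real) \<Rightarrow> vec \<Rightarrow> vec \<Rightarrow> bool" where
  "subgrad d F w g \<longleftrightarrow> w \<in> Bd d \<and> g \<in> Rd d \<and>
     (\<forall>v\<in>Bd d. F w + ipd d g (vsub v w) \<le> F v)"

definition has_grad_at :: "nat \<Rightarrow> (vec \<Rightarrow> real) \<Rightarrow> vec \<Rightarrow> vec \<Rightarrow> bool" where
  "has_grad_at d F w g \<longleftrightarrow> w \<in> Bd d \<and> g \<in> Rd d \<and>
     (\<forall>e>0. \<exists>\<delta>>0. \<forall>v\<in>Bd d. nrmd d (vsub v w) < \<delta> \<longrightarrow>
        \<bar>F v - F w - ipd d g (vsub v w)\<bar> \<le> e * nrmd d (vsub v w))"

definition Md :: "nat \<Rightarrow> mat set" where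
  "Md d = {A. \<forall>i k. d \<le> i \<or> d \<le> k \<longrightarrow> A i k = 0}"

definition mv :: "nat \<Rightarrow> mat \<Rightarrow> vec \<Rightarrow> vec" where
  "mv d A x = (\<lambda>i. if i < d then (\<Sum>k<d. A i k * x k) else 0)"

definition madd :: "mat \<Rightarrow> mat \<Rightarrow> mat" where
  "madd A B = (\<lambda>i k. A i k + B i k)"

definition hessian_at :: "nat \<Rightarrow> (vec \<Rightarrow> real) \<Rightarrow> vec \<Rightarrow> mat \<Rightarrow> bool" where
  "hessian_at d F w H \<longleftrightarrow> w \<in> Bd d \<and> H \<in> Md d \<and>
     (\<exists>G r. r > 0 \<and>
        (\<forall>v\<in>Bd d. nrmd d (vsub v w) < r \<longrightarrow> has_grad_at d F v (G v)) \<and>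
        (\<forall>e>0. \<exists>\<delta>>0. \<forall>v\<in>Bd d. nrmd d (vsub v w) < \<delta> \<longrightarrow>
           nrmd d (\<lambda>i. G v i - G w i - mv d H (vsub v w) i) \<le> e * nrmd d (vsub v w)))"

definition diag_mat :: "nat \<Rightarrow> mat \<Rightarrow> bool" where
  "diag_mat d D \<longleftrightarrow> D \<in> Md d \<and> (\<forall>i k. i \<noteq> k \<longrightarrow> D i k = 0)"

definition inverse_mat :: "nat \<Rightarrow> mat \<Rightarrow> mat \<Rightarrow> bool" where
  "inverse_mat d A B \<longleftrightarrow> B \<in> Md d \<and>
     (\<forall>i<d. \<forall>k<d. (\<Sum>l<d. A i l * B l k) = (if i = k then 1 else 0)
                 \<and> (\<Sum>l<d. B i l * A l k) = (if i = k then 1 else 0))"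

text \<open>Linear span (finite linear combinations; span of {} is {0}).\<close>
definition lin_span :: "vec set \<Rightarrow> vec set" where
  "lin_span S = {v. \<exists>T c. finite T \<and> T \<subseteq> S \<and> v = (\<lambda>i. \<Sum>u\<in>T. c u * u i)}"

text \<open>Generators of the span in Assumption 1, for machine function F and set W.\<close>
definition gens :: "nat \<Rightarrow> (vec \<Rightarrow> real) \<Rightarrow> vec set \<Rightarrow> vec set" where
  "gens d F W =
     W \<union> {g. \<exists>w'\<in>W. subgrad d F w' g}
       \<union> {mv d (madd H D) w'' | w' w'' H D B. w' \<in> W \<and> w'' \<in> W \<and> hessian_at d F w' H
             \<and> diag_mat d D \<and> inverse_mat d (madd H D) B}
       \<union> {mv d B w'' | w' w'' H D B. w' \<in> W \<and> w'' \<in> W \<and> hessian_at d F w' H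
             \<and> diag_mat d D \<and> inverse_mat d (madd H D) B}"

definition valid_add :: "nat \<Rightarrow> (vec \<Rightarrow> real) \<Rightarrow> vec set \<Rightarrow> vec \<Rightarrow> bool" where
  "valid_add d F W w \<longleftrightarrow> (\<exists>g \<gamma> \<nu>. subgrad d F w g \<and> \<gamma> \<ge> 0 \<and> \<nu> \<ge> 0 \<and> \<gamma> + \<nu> > 0 \<and>
      (\<lambda>i. \<gamma> * w i + \<nu> * g i) \<in> lin_span (gens d F W))"

text \<open>Local computation between communication rounds: finitely many points
  added one after another.\<close>
definition local_ext :: "nat \<Rightarrow> (vec \<Rightarrow> real) \<Rightarrow> vec set \<Rightarrow> vec set \<Rightarrow> bool" where
  "local_ext d F W W' \<longleftrightarrow> (\<exists>ws. W' = W \<union> set ws \<and>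
      (\<forall>k<length ws. valid_add d F (W \<union> set (take k ws)) (ws ! k)))"

text \<open>Ws t j = the set W_j after t communication rounds (m machines,
  machine j holds Fs j), for a run with T rounds.\<close>
definition is_run :: "nat \<Rightarrow> nat \<Rightarrow> (nat \<Rightarrow> vec \<Rightarrow> real) \<Rightarrow> nat \<Rightarrow> (nat \<Rightarrow> nat \<Rightarrow> vec set) \<Rightarrow> bool" where
  "is_run d m Fs T Ws \<longleftrightarrow> (\<forall>j<m. Ws 0 j = {(\<lambda>_. 0)}) \<and>
     (\<forall>t<T. \<exists>V. (\<forall>j<m. local_ext d (Fs j) (Ws t j) (V j)) \<and>
                 (\<forall>j<m. Ws (Suc t) j = (\<Union>i<m. V i)))"

text \<open>A distributed algorithm for m machines with designated output machine j0:
  given the dimension d, the local functions and the number of rounds T, it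
  produces a run (the sets W_j) and an output point. Assumption 1 demands that
  every run obeys the rules and the output lies in span W_j0 after round T.\<close>
type_synonym algorithm =
  "nat \<Rightarrow> (nat \<Rightarrow> vec \<Rightarrow> real) \<Rightarrow> nat \<Rightarrow> (nat \<Rightarrow> nat \<Rightarrow> vec set) \<times> vec"

definition valid_algorithm :: "nat \<Rightarrow> nat \<Rightarrow> algorithm \<Rightarrow> bool" where
  "valid_algorithm m j0 alg \<longleftrightarrow> j0 < m \<and>
     (\<forall>d Fs T. is_run d m Fs T (fst (alg d Fs T)) \<and>
        snd (alg d Fs T) \<in> lin_span (fst (alg d Fs T) T j0))"

end

theory Submission
  imports Defs "HOL-Analysis.L2_Norm" "HOL-Library.Countable"
begin


definition rr :: "nat \<Rightarrow> real" where
  "rr n = max (-1) (min 1 (real_of_rat (from_nat n)))"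

definition cw :: "nat \<Rightarrow> real" where "cw n = (1/2)^Suc n"

definition ff :: "real \<Rightarrow> real" where
  "ff x = (\<Sum>n. cw n * \<bar>x - rr n\<bar>)"

lemma rr_bound: "\<bar>rr n\<bar> \<le> 1" by (simp add: rr_def)

lemma cw_pos: "0 < cw n" by (simp add: cw_def)

lemma cw_sums: "cw sums 1"
proof -
  have "(\<lambda>n. (1/2::real)^n) sums (1 / (1 - 1/2))" by (rule geometric_sums) simp
  then have "(\<lambda>n. (1/2::real) * (1/2)^n) sums ((1/2) * (1 / (1 - 1/2)))" by (rule sums_mult)
  then show ?thesis unfolding cw_def by simp
qed

lemma cw_summable: "summable cw"
  using cw_sums sums_summable by blast

lemma ff_summable: "summable (\<lambda>n. cw n * \<bar>x - rr n\<bar>)"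
proof (rule summable_comparison_test)
  show "\<exists>N. \<forall>n\<ge>N. norm (cw n * \<bar>x - rr n\<bar>) \<le> (\<bar>x\<bar> + 1) * cw n"
  proof (intro exI allI impI)
    fix n :: nat
    have "\<bar>x - rr n\<bar> \<le> \<bar>x\<bar> + 1" using rr_bound[of n] by linarith
    then show "norm (cw n * \<bar>x - rr n\<bar>) \<le> (\<bar>x\<bar> + 1) * cw n"
      using cw_pos[of n] by (simp add: mult.commute mult_left_mono)
  qed
  show "summable (\<lambda>n. (\<bar>x\<bar> + 1) * cw n)"
    using cw_summable by (rule summable_mult)
qed

lemma ff_sums: "(\<lambda>n. cw n * \<bar>x - rr n\<bar>) sums ff x"
  unfolding ff_def using ff_summable by (rule summable_sums)

lemma ff_le: "ff x \<le> ff y + \<bar>x - y\<bar>"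
proof -
  have s: "(\<lambda>n. cw n * \<bar>y - rr n\<bar> + \<bar>x - y\<bar> * cw n) sums (ff y + \<bar>x - y\<bar> * 1)"
    by (intro sums_add sums_mult ff_sums cw_sums)
  have "cw n * \<bar>x - rr n\<bar> \<le> cw n * \<bar>y - rr n\<bar> + \<bar>x - y\<bar> * cw n" for n
  proof -
    have "\<bar>x - rr n\<bar> \<le> \<bar>y - rr n\<bar> + \<bar>x - y\<bar>" by linarith
    then have "cw n * \<bar>x - rr n\<bar> \<le> cw n * (\<bar>y - rr n\<bar> + \<bar>x - y\<bar>)"
      using cw_pos[of n] by (simp add: mult_left_mono)
    then show ?thesis by (simp add: algebra_simps)
  qed
  from sums_le[OF this ff_sums s] show ?thesis by simp
qed

lemma ff_lip: "\<bar>ff x - ff y\<bar> \<le> \<bar>x - y\<bar>"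
  using ff_le[of x y] ff_le[of y x] by (simp add: abs_minus_commute abs_le_iff)

lemma ff_convex:
  assumes "0 \<le> t" "t \<le> 1"
  shows "ff (t * x + (1 - t) * y) \<le> t * ff x + (1 - t) * ff y"
proof -
  have s: "(\<lambda>n. t * (cw n * \<bar>x - rr n\<bar>) + (1 - t) * (cw n * \<bar>y - rr n\<bar>)) sums (t * ff x + (1 - t) * ff y)"
    by (intro sums_add sums_mult ff_sums)
  have "cw n * \<bar>t * x + (1 - t) * y - rr n\<bar> \<le> t * (cw n * \<bar>x - rr n\<bar>) + (1 - t) * (cw n * \<bar>y - rr n\<bar>)" for n
  proof -
    have "\<bar>t * x + (1 - t) * y - rr n\<bar> = \<bar>t * (x - rr n) + (1 - t) * (y - rr n)\<bar>"
      by (simp add: algebra_simps)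
    also have "\<dots> \<le> \<bar>t * (x - rr n)\<bar> + \<bar>(1 - t) * (y - rr n)\<bar>" by (rule abs_triangle_ineq)
    also have "\<dots> = t * \<bar>x - rr n\<bar> + (1 - t) * \<bar>y - rr n\<bar>"
      using assms by (simp add: abs_mult)
    finally have h: "\<bar>t * x + (1 - t) * y - rr n\<bar> \<le> t * \<bar>x - rr n\<bar> + (1 - t) * \<bar>y - rr n\<bar>" .
    have "cw n * \<bar>t * x + (1 - t) * y - rr n\<bar> \<le> cw n * (t * \<bar>x - rr n\<bar> + (1 - t) * \<bar>y - rr n\<bar>)"
      using cw_pos[of n] by (intro mult_left_mono[OF h]) simp
    then show ?thesis by (simp add: algebra_simps)
  qed
  from sums_le[OF this ff_sums s] show ?thesis .
qed

lemma ff_kink: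
  assumes "0 \<le> t"
  shows "cw n * (2 * t) \<le> ff (rr n + t) + ff (rr n - t) - 2 * ff (rr n)"
proof -
  define x where "x = rr n"
  define h where "h k = cw k * \<bar>x + t - rr k\<bar> + cw k * \<bar>x - t - rr k\<bar> - 2 * (cw k * \<bar>x - rr k\<bar>)" for k
  have hs: "h sums (ff (x + t) + ff (x - t) - 2 * ff x)"
    unfolding h_def by (intro sums_add sums_diff sums_mult ff_sums)
  have hnn: "0 \<le> h k" for k
  proof -
    have "2 * \<bar>x - rr k\<bar> \<le> \<bar>x + t - rr k\<bar> + \<bar>x - t - rr k\<bar>" by (smt (verit))
    then have "cw k * (2 * \<bar>x - rr k\<bar>) \<le> cw k * (\<bar>x + t - rr k\<bar> + \<bar>x - t - rr k\<bar>)"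
      using cw_pos[of k] by (intro mult_left_mono) auto
    then show ?thesis unfolding h_def by (simp add: algebra_simps)
  qed
  have "cw n * (2 * t) = h n" unfolding h_def x_def using assms by (simp add: algebra_simps)
  also have "h n \<le> (ff (x + t) + ff (x - t) - 2 * ff x)"
    using sum_le_suminf[OF sums_summable[OF hs], of "{n}"] hnn sums_unique[OF hs] by simp
  finally show ?thesis unfolding x_def .
qed

lemma rr_dense:
  assumes "-1 \<le> x" "x \<le> 1" "0 < \<rho>"
  shows "\<exists>n. \<bar>rr n - x\<bar> < \<rho>"
proof -
  have "max (-1) (x - \<rho>) < min 1 (x + \<rho>)" using assms by auto
  then obtain q where q: "q \<in> \<rat>" "max (-1) (x - \<rho>) < q" "q < min 1 (x + \<rho>)"
    using Rats_dense_in_real by blast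
  then obtain r where r: "q = real_of_rat r" by (auto simp: Rats_def)
  obtain n where "r = from_nat n" using surj_from_nat by (metis from_nat_to_nat)
  then have "rr n = q" using q r by (simp add: rr_def)
  then show ?thesis using q by (intro exI[of _ n]) auto
qed

definition phi :: "real \<Rightarrow> real \<Rightarrow> real" where
  "phi \<delta> x = sqrt (x\<^sup>2 + \<delta>\<^sup>2) - \<delta>"

lemma phi_cmod: "sqrt (x\<^sup>2 + \<delta>\<^sup>2) = cmod (Complex x \<delta>)"
  by (simp add: cmod_def)

lemma phi_convex:
  assumes "0 \<le> t" "t \<le> 1"
  shows "phi \<delta> (t * a + (1 - t) * b) \<le> t * phi \<delta> a + (1 - t) * phi \<delta> b"
proof -
  have "Complex (t * a + (1 - t) * b) \<delta> = of_real t * Complex a \<delta> + of_real (1 - t) * Complex b \<delta>"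
    by (simp add: complex_eq_iff algebra_simps)
  then have "cmod (Complex (t * a + (1 - t) * b) \<delta>) \<le> cmod (of_real t * Complex a \<delta>) + cmod (of_real (1 - t) * Complex b \<delta>)"
    by (simp add: norm_triangle_ineq)
  also have "\<dots> = t * cmod (Complex a \<delta>) + (1 - t) * cmod (Complex b \<delta>)"
    using assms by (simp only: norm_mult norm_of_real)
  finally show ?thesis unfolding phi_def phi_cmod by (simp add: algebra_simps)
qed

lemma phi_lip: "\<bar>phi \<delta> a - phi \<delta> b\<bar> \<le> \<bar>a - b\<bar>"
proof -
  have "\<bar>cmod (Complex a \<delta>) - cmod (Complex b \<delta>)\<bar> \<le> cmod (Complex a \<delta> - Complex b \<delta>)"
    by (rule norm_triangle_ineq3)
  also have "\<dots> = \<bar>a - b\<bar>" by (simp add: cmod_def)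
  finally show ?thesis unfolding phi_def phi_cmod by simp
qed

lemma phi_ge: "\<bar>a\<bar> - \<delta> \<le> phi \<delta> a"
proof -
  have "sqrt (a\<^sup>2) \<le> sqrt (a\<^sup>2 + \<delta>\<^sup>2)" by simp
  then show ?thesis unfolding phi_def by simp
qed

lemma phi_nonneg: "0 \<le> \<delta> \<Longrightarrow> 0 \<le> phi \<delta> a"
proof -
  assume "0 \<le> \<delta>"
  have "sqrt (\<delta>\<^sup>2) \<le> sqrt (a\<^sup>2 + \<delta>\<^sup>2)" by simp
  then show ?thesis unfolding phi_def using \<open>0 \<le> \<delta>\<close> by simp
qed

lemma phi_zero: "0 \<le> \<delta> \<Longrightarrow> phi \<delta> 0 = 0"
  by (simp add: phi_def)

lemma phi_le: "0 < \<delta> \<Longrightarrow> phi \<delta> a \<le> a\<^sup>2 / (2 * \<delta>)"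
proof -
  assume d: "0 < \<delta>"
  have e: "2 * \<delta> * (a\<^sup>2 / (2 * \<delta>)) = a\<^sup>2" using d by simp
  have "(\<delta> + a\<^sup>2 / (2 * \<delta>))\<^sup>2 = \<delta>\<^sup>2 + 2 * \<delta> * (a\<^sup>2 / (2 * \<delta>)) + (a\<^sup>2 / (2 * \<delta>))\<^sup>2"
    by (simp add: power2_eq_square algebra_simps)
  then have "a\<^sup>2 + \<delta>\<^sup>2 \<le> (\<delta> + a\<^sup>2 / (2 * \<delta>))\<^sup>2"
    using e by simp
  then have "sqrt (a\<^sup>2 + \<delta>\<^sup>2) \<le> \<delta> + a\<^sup>2 / (2 * \<delta>)"
    using d by (intro real_le_lsqrt) auto
  then show ?thesis unfolding phi_def by simp
qed




definition sq :: "nat \<Rightarrow> vec \<Rightarrow> real" where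
  "sq d w = (\<Sum>i<d. (w i)\<^sup>2)"

definition Vk :: "nat \<Rightarrow> vec set" where
  "Vk K = {x. \<forall>i\<ge>K. x i = 0}"

lemma sq_ge0: "0 \<le> sq d w"
  unfolding sq_def by (intro sum_nonneg) simp

lemma nrmd_sq: "nrmd d x = sqrt (sq d x)"
  unfolding nrmd_def ipd_def sq_def by (simp add: power2_eq_square)

lemma nrmd_sq2: "(nrmd d x)\<^sup>2 = sq d x"
  unfolding nrmd_sq by (simp add: sq_ge0)

lemma nrmd_nonneg: "0 \<le> nrmd d x"
  unfolding nrmd_sq by (simp add: sq_ge0)

lemma nrmd_L2: "nrmd d x = L2_set x {..<d}"
  unfolding nrmd_sq sq_def L2_set_def by simp

lemma coord_le_nrmd:
  assumes "i < d" shows "\<bar>x i\<bar> \<le> nrmd d x"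
proof -
  have "(x i)\<^sup>2 \<le> sq d x"
    unfolding sq_def using assms by (intro member_le_sum) auto
  then have "sqrt ((x i)\<^sup>2) \<le> sqrt (sq d x)" by (rule real_sqrt_le_mono)
  then show ?thesis unfolding nrmd_sq by (simp only: real_sqrt_abs)
qed

lemma sq_comb:
  "sq d (\<lambda>i. t * x i + (1 - t) * y i) = t * sq d x + (1 - t) * sq d y - t * (1 - t) * sq d (vsub x y)"
proof -
  have "(t * x i + (1 - t) * y i)\<^sup>2 = t * (x i)\<^sup>2 + (1 - t) * (y i)\<^sup>2 - t * (1 - t) * (vsub x y i)\<^sup>2" for i
    unfolding vsub_def by (simp add: power2_eq_square algebra_simps)
  then show ?thesis
    unfolding sq_def by (simp add: sum.distrib sum_subtractf sum_distrib_left)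
qed

lemma sum_abs_le_L2:
  fixes z :: vec
  assumes "N < d"
  shows "(\<Sum>i\<le>N. \<bar>z i\<bar>) \<le> sqrt (real N + 1) * nrmd d z"
proof -
  have A: "(\<Sum>i\<le>N. \<bar>z i\<bar>) \<le> L2_set z {..N} * sqrt (real N + 1)"
    using L2_set_mult_ineq[of z "\<lambda>_. 1::real" "{..N}"] by (simp add: L2_set_def add.commute)
  have "(\<Sum>i\<le>N. (z i)\<^sup>2) \<le> (\<Sum>i<d. (z i)\<^sup>2)"
    using assms by (intro sum_mono2) auto
  then have "L2_set z {..N} \<le> nrmd d z" unfolding L2_set_def nrmd_sq sq_def by simp
  then have B: "L2_set z {..N} * sqrt (real N + 1) \<le> nrmd d z * sqrt (real N + 1)"
    by (intro mult_right_mono) auto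
  have C: "nrmd d z * sqrt (real N + 1) = sqrt (real N + 1) * nrmd d z" by simp
  from A B C show ?thesis by linarith
qed

lemma pair_sum:
  fixes z :: "nat \<Rightarrow> real"
  assumes "p < 2" "\<And>i. 0 \<le> z i"
  shows "(\<Sum>i<N. if i mod 2 = p then z i + z (Suc i) else 0) + (if N mod 2 = p then z N else 0)
           \<le> (\<Sum>i\<le>N. z i)"
proof (induction N)
  case 0 then show ?case using assms by simp
next
  case (Suc N)
  have ex: "(if N mod 2 = p then z (Suc N) else 0) + (if Suc N mod 2 = p then z (Suc N) else 0) = z (Suc N)"
    using assms(1) by (auto simp: mod_Suc)
  have "(\<Sum>i<Suc N. if i mod 2 = p then z i + z (Suc i) else 0) + (if Suc N mod 2 = p then z (Suc N) else 0)
      = (\<Sum>i<N. if i mod 2 = p then z i + z (Suc i) else 0) + (if N mod 2 = p then z N else 0)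
        + ((if N mod 2 = p then z (Suc N) else 0) + (if Suc N mod 2 = p then z (Suc N) else 0))"
    by simp
  also have "\<dots> \<le> (\<Sum>i\<le>N. z i) + z (Suc N)" using Suc ex by simp
  finally show ?case by simp
qed

lemma sq_lip:
  assumes "x \<in> Bd d" "y \<in> Bd d"
  shows "\<bar>sq d x - sq d y\<bar> \<le> 2 * nrmd d (vsub x y)"
proof -
  have "sq d x - sq d y = (\<Sum>i<d. (x i - y i) * (x i + y i))"
    unfolding sq_def by (simp add: sum_subtractf[symmetric] power2_eq_square algebra_simps)
  then have "\<bar>sq d x - sq d y\<bar> \<le> (\<Sum>i<d. \<bar>x i - y i\<bar> * \<bar>x i + y i\<bar>)"
    by (simp add: abs_mult[symmetric] sum_abs)
  also have "\<dots> \<le> L2_set (\<lambda>i. x i - y i) {..<d} * L2_set (\<lambda>i. x i + y i) {..<d}"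
    by (rule L2_set_mult_ineq)
  also have "\<dots> \<le> nrmd d (vsub x y) * 2"
  proof (rule mult_mono)
    show "L2_set (\<lambda>i. x i - y i) {..<d} \<le> nrmd d (vsub x y)"
      by (simp add: nrmd_L2 vsub_def)
    have "L2_set (\<lambda>i. x i + y i) {..<d} \<le> L2_set x {..<d} + L2_set y {..<d}"
      by (rule L2_set_triangle_ineq)
    also have "\<dots> \<le> 2" using assms unfolding Bd_def by (simp add: nrmd_L2[symmetric])
    finally show "L2_set (\<lambda>i. x i + y i) {..<d} \<le> 2" .
    show "0 \<le> nrmd d (vsub x y)" by (rule nrmd_nonneg)
    show "0 \<le> L2_set (\<lambda>i. x i + y i) {..<d}" by (simp add: L2_set_def sum_nonneg)
  qed
  finally show ?thesis by simp
qed

definition chn :: "nat \<Rightarrow> nat \<Rightarrow> real \<Rightarrow> vec \<Rightarrow> real" where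
  "chn p N \<delta> w = (\<Sum>i<N. if i mod 2 = p then phi \<delta> (w i - w (Suc i)) else 0)"

lemma chn_convex:
  assumes "0 \<le> t" "t \<le> 1"
  shows "chn p N \<delta> (\<lambda>i. t * x i + (1 - t) * y i) \<le> t * chn p N \<delta> x + (1 - t) * chn p N \<delta> y"
proof -
  have "chn p N \<delta> (\<lambda>i. t * x i + (1 - t) * y i)
     \<le> (\<Sum>i<N. t * (if i mod 2 = p then phi \<delta> (x i - x (Suc i)) else 0)
               + (1 - t) * (if i mod 2 = p then phi \<delta> (y i - y (Suc i)) else 0))"
    unfolding chn_def
  proof (rule sum_mono)
    fix i
    have "t * x i + (1 - t) * y i - (t * x (Suc i) + (1 - t) * y (Suc i))
        = t * (x i - x (Suc i)) + (1 - t) * (y i - y (Suc i))" by (simp add: algebra_simps)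
    then show "(if i mod 2 = p then phi \<delta> (t * x i + (1 - t) * y i - (t * x (Suc i) + (1 - t) * y (Suc i))) else 0)
        \<le> t * (if i mod 2 = p then phi \<delta> (x i - x (Suc i)) else 0)
          + (1 - t) * (if i mod 2 = p then phi \<delta> (y i - y (Suc i)) else 0)"
      using phi_convex[OF assms] by simp
  qed
  also have "\<dots> = t * chn p N \<delta> x + (1 - t) * chn p N \<delta> y"
    unfolding chn_def by (simp add: sum.distrib sum_distrib_left)
  finally show ?thesis .
qed

lemma chn_lip:
  assumes "p < 2" "N < d"
  shows "\<bar>chn p N \<delta> x - chn p N \<delta> y\<bar> \<le> sqrt (real N + 1) * nrmd d (vsub x y)"
proof -
  define z where "z i = \<bar>x i - y i\<bar>" for i
  have "\<bar>chn p N \<delta> x - chn p N \<delta> y\<bar>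
     = \<bar>\<Sum>i<N. (if i mod 2 = p then phi \<delta> (x i - x (Suc i)) - phi \<delta> (y i - y (Suc i)) else 0)\<bar>"
    unfolding chn_def by (simp add: sum_subtractf[symmetric] if_distrib cong: if_cong)
  also have "\<dots> \<le> (\<Sum>i<N. \<bar>if i mod 2 = p then phi \<delta> (x i - x (Suc i)) - phi \<delta> (y i - y (Suc i)) else 0\<bar>)"
    by (rule sum_abs)
  also have "\<dots> \<le> (\<Sum>i<N. if i mod 2 = p then z i + z (Suc i) else 0)"
  proof (rule sum_mono)
    fix i
    have "\<bar>phi \<delta> (x i - x (Suc i)) - phi \<delta> (y i - y (Suc i))\<bar> \<le> \<bar>(x i - x (Suc i)) - (y i - y (Suc i))\<bar>"
      by (rule phi_lip)
    also have "\<dots> \<le> z i + z (Suc i)" unfolding z_def by linarith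
    finally show "\<bar>if i mod 2 = p then phi \<delta> (x i - x (Suc i)) - phi \<delta> (y i - y (Suc i)) else 0\<bar>
        \<le> (if i mod 2 = p then z i + z (Suc i) else 0)" by simp
  qed
  also have "\<dots> \<le> (\<Sum>i\<le>N. z i)"
  proof -
    have zn: "\<And>i. 0 \<le> z i" unfolding z_def by simp
    have "0 \<le> (if N mod 2 = p then z N else 0)" unfolding z_def by simp
    have P: "(\<Sum>i<N. if i mod 2 = p then z i + z (Suc i) else 0) + (if N mod 2 = p then z N else 0) \<le> (\<Sum>i\<le>N. z i)"
      by (rule pair_sum) (simp_all add: assms(1) z_def)
    show ?thesis using P \<open>0 \<le> (if N mod 2 = p then z N else 0)\<close> by linarith
  qed
  also have "\<dots> \<le> sqrt (real N + 1) * nrmd d (vsub x y)"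
    using sum_abs_le_L2[OF assms(2), of "vsub x y"] unfolding z_def vsub_def by simp
  finally show ?thesis .
qed




lemma nrmd_triangle: "nrmd d (\<lambda>i. a i + b i) \<le> nrmd d a + nrmd d b"
  unfolding nrmd_L2 by (rule L2_set_triangle_ineq)

lemma nrmd_scale: "nrmd d (\<lambda>i. c * x i) = \<bar>c\<bar> * nrmd d x"
proof -
  have "sq d (\<lambda>i. c * x i) = c\<^sup>2 * sq d x"
    unfolding sq_def by (simp add: power_mult_distrib sum_distrib_left)
  then show ?thesis unfolding nrmd_sq by (simp add: real_sqrt_mult)
qed

lemma vsub_upd: "vsub (x(j := a)) x = (\<lambda>i. if i = j then a - x j else 0)"
  unfolding vsub_def by auto

lemma sq_single: "j < d \<Longrightarrow> sq d (\<lambda>i. if i = j then c else 0) = c\<^sup>2"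
  unfolding sq_def by (simp add: if_distrib[of "\<lambda>x. x\<^sup>2"] sum.delta cong: if_cong)

lemma nrmd_upd: "j < d \<Longrightarrow> nrmd d (vsub (x(j := a)) x) = \<bar>a - x j\<bar>"
  unfolding nrmd_sq vsub_upd by (simp add: sq_single)

lemma ipd_upd: "j < d \<Longrightarrow> ipd d g (vsub (x(j := a)) x) = g j * (a - x j)"
  unfolding ipd_def vsub_upd by (simp add: if_distrib[of "\<lambda>x. g _ * x"] sum.delta cong: if_cong)

lemma nrmd_upd_le: "j < d \<Longrightarrow> nrmd d (x(j := a)) \<le> nrmd d x + \<bar>a - x j\<bar>"
proof -
  assume j: "j < d"
  have "x(j := a) = (\<lambda>i. x i + vsub (x(j := a)) x i)" unfolding vsub_def by auto
  then have "nrmd d (x(j := a)) \<le> nrmd d x + nrmd d (vsub (x(j := a)) x)"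
    using nrmd_triangle[of d x "vsub (x(j := a)) x"] by simp
  then show ?thesis using nrmd_upd[OF j] by simp
qed

lemma nrmd_vsub_tri: "nrmd d (vsub a c) \<le> nrmd d (vsub a b) + nrmd d (vsub b c)"
proof -
  have "vsub a c = (\<lambda>i. vsub a b i + vsub b c i)" unfolding vsub_def by auto
  then show ?thesis using nrmd_triangle[of d "vsub a b" "vsub b c"] by simp
qed

lemma abs_cmul: "0 \<le> (c::real) \<Longrightarrow> \<bar>c * a - c * b\<bar> = c * \<bar>a - b\<bar>"
  by (metis abs_mult abs_of_nonneg right_diff_distrib)

lemma lip_mono: "L \<le> L' \<Longrightarrow> lipschitz_on_ball d L F \<Longrightarrow> lipschitz_on_ball d L' F"
  unfolding lipschitz_on_ball_def
  by (meson nrmd_nonneg mult_right_mono order_trans)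

locale cons =
  fixes d N :: nat and \<mu> \<alpha> \<delta> \<eta> :: real
  assumes N_pos: "0 < N" and Nd: "N < d" and mu_pos: "0 < \<mu>" and al_pos: "0 < \<alpha>"
    and de_pos: "0 < \<delta>" and eta_pos: "0 < \<eta>"
begin

definition R :: "nat \<Rightarrow> vec \<Rightarrow> real" where
  "R p w = \<mu> / 2 * sq d w - \<alpha> * w 0 + 2 * \<alpha> * chn p N \<delta> w"

definition F :: "nat \<Rightarrow> vec \<Rightarrow> real" where
  "F p w = \<eta> * ff (w 0) + R p w"

lemma d_pos: "0 < d" using N_pos Nd by simp

lemma R_convex:
  assumes "0 \<le> t" "t \<le> 1"
  shows "R p (\<lambda>i. t * x i + (1 - t) * y i) \<le> t * R p x + (1 - t) * R p y - \<mu> / 2 * t * (1 - t) * sq d (vsub x y)"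
proof -
  have c: "chn p N \<delta> (\<lambda>i. t * x i + (1 - t) * y i) \<le> t * chn p N \<delta> x + (1 - t) * chn p N \<delta> y"
    by (rule chn_convex[OF assms])
  have "2 * \<alpha> * chn p N \<delta> (\<lambda>i. t * x i + (1 - t) * y i) \<le> 2 * \<alpha> * (t * chn p N \<delta> x + (1 - t) * chn p N \<delta> y)"
    using al_pos by (intro mult_left_mono[OF c]) auto
  moreover have "t * (\<mu> / 2 * sq d x - \<alpha> * x 0 + 2 * \<alpha> * chn p N \<delta> x) +
       (1 - t) * (\<mu> / 2 * sq d y - \<alpha> * y 0 + 2 * \<alpha> * chn p N \<delta> y) -
       \<mu> / 2 * t * (1 - t) * sq d (vsub x y)
     - (\<mu> / 2 * (t * sq d x + (1 - t) * sq d y - t * (1 - t) * sq d (vsub x y)) -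
       \<alpha> * (t * x 0 + (1 - t) * y 0))
     = 2 * \<alpha> * (t * chn p N \<delta> x + (1 - t) * chn p N \<delta> y)"
    by (simp add: field_simps)
  ultimately show ?thesis
    unfolding R_def sq_comb by linarith
qed

lemma F_sc:
  assumes "0 \<le> lam" "lam \<le> \<mu>"
  shows "strongly_convex_on_ball d lam (F p)"
  unfolding strongly_convex_on_ball_def
proof (intro ballI allI impI)
  fix x y and t :: real
  assume t: "0 \<le> t \<and> t \<le> 1"
  have r: "R p (\<lambda>i. t * x i + (1 - t) * y i) \<le> t * R p x + (1 - t) * R p y - \<mu> / 2 * t * (1 - t) * sq d (vsub x y)"
    using R_convex t by auto
  have f: "\<eta> * ff (t * x 0 + (1 - t) * y 0) \<le> \<eta> * (t * ff (x 0) + (1 - t) * ff (y 0))"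
    using ff_convex t eta_pos by (intro mult_left_mono) auto
  have l: "lam / 2 * t * (1 - t) * sq d (vsub x y) \<le> \<mu> / 2 * t * (1 - t) * sq d (vsub x y)"
    using assms t sq_ge0[of d "vsub x y"]
    by (intro mult_right_mono mult_mono) auto
  have "F p (\<lambda>i. t * x i + (1 - t) * y i) = \<eta> * ff (t * x 0 + (1 - t) * y 0) + R p (\<lambda>i. t * x i + (1 - t) * y i)"
    unfolding F_def by simp
  also have "\<dots> \<le> \<eta> * (t * ff (x 0) + (1 - t) * ff (y 0)) + (t * R p x + (1 - t) * R p y - lam / 2 * t * (1 - t) * sq d (vsub x y))"
    using r f l by linarith
  also have "\<dots> = t * F p x + (1 - t) * F p y - lam / 2 * t * (1 - t) * (nrmd d (vsub x y))\<^sup>2"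
    unfolding F_def nrmd_sq2 by (simp add: algebra_simps)
  finally show "F p (\<lambda>i. t * x i + (1 - t) * y i)
           \<le> t * F p x + (1 - t) * F p y - lam / 2 * t * (1 - t) * (nrmd d (vsub x y))\<^sup>2" .
qed

lemma F_lip:
  assumes "p < 2"
  shows "lipschitz_on_ball d (\<eta> + \<mu> + \<alpha> + 2 * \<alpha> * sqrt (real N + 1)) (F p)"
  unfolding lipschitz_on_ball_def
proof (intro ballI)
  fix x y assume x: "x \<in> Bd d" and y: "y \<in> Bd d"
  define n where "n = nrmd d (vsub x y)"
  have c0: "\<bar>x 0 - y 0\<bar> \<le> n"
    using coord_le_nrmd[OF d_pos, of "vsub x y"] unfolding n_def vsub_def by simp
  have t1: "\<bar>\<eta> * ff (x 0) - \<eta> * ff (y 0)\<bar> \<le> \<eta> * n"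
  proof -
    have "\<bar>\<eta> * ff (x 0) - \<eta> * ff (y 0)\<bar> = \<eta> * \<bar>ff (x 0) - ff (y 0)\<bar>"
      using eta_pos by (simp add: abs_cmul)
    also have "\<dots> \<le> \<eta> * n" using ff_lip c0 eta_pos by (intro mult_left_mono) (auto intro: order_trans)
    finally show ?thesis .
  qed
  have t2: "\<bar>\<mu> / 2 * sq d x - \<mu> / 2 * sq d y\<bar> \<le> \<mu> * n"
  proof -
    have "\<bar>\<mu> / 2 * sq d x - \<mu> / 2 * sq d y\<bar> = \<mu> / 2 * \<bar>sq d x - sq d y\<bar>"
      using mu_pos by (intro abs_cmul) simp
    also have "\<dots> \<le> \<mu> / 2 * (2 * n)" using sq_lip[OF x y] mu_pos unfolding n_def by (intro mult_left_mono) auto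
    finally show ?thesis by simp
  qed
  have t3: "\<bar>\<alpha> * x 0 - \<alpha> * y 0\<bar> \<le> \<alpha> * n"
  proof -
    have "\<bar>\<alpha> * x 0 - \<alpha> * y 0\<bar> = \<alpha> * \<bar>x 0 - y 0\<bar>"
      using al_pos by (intro abs_cmul) simp
    also have "\<dots> \<le> \<alpha> * n" using c0 al_pos by (intro mult_left_mono) auto
    finally show ?thesis .
  qed
  have t4: "\<bar>2 * \<alpha> * chn p N \<delta> x - 2 * \<alpha> * chn p N \<delta> y\<bar> \<le> 2 * \<alpha> * (sqrt (real N + 1) * n)"
  proof -
    have "\<bar>2 * \<alpha> * chn p N \<delta> x - 2 * \<alpha> * chn p N \<delta> y\<bar> = 2 * \<alpha> * \<bar>chn p N \<delta> x - chn p N \<delta> y\<bar>"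
      using al_pos by (intro abs_cmul) simp
    also have "\<dots> \<le> 2 * \<alpha> * (sqrt (real N + 1) * n)"
      using chn_lip[OF assms Nd] al_pos unfolding n_def by (intro mult_left_mono) auto
    finally show ?thesis .
  qed
  have "\<bar>F p x - F p y\<bar> \<le> \<eta> * n + \<mu> * n + \<alpha> * n + 2 * \<alpha> * (sqrt (real N + 1) * n)"
    unfolding F_def R_def using t1 t2 t3 t4 by linarith
  then show "\<bar>F p x - F p y\<bar> \<le> (\<eta> + \<mu> + \<alpha> + 2 * \<alpha> * sqrt (real N + 1)) * nrmd d (vsub x y)"
    unfolding n_def by (simp add: algebra_simps)
qed

end



lemma half_aux: "(a::real) \<le> 1/2*b + (1-1/2)*c - k \<Longrightarrow> 0 \<le> k \<Longrightarrow> 0 \<le> b + c - 2*a"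
  by simp

context cons begin

lemma upd_Bd:
  assumes "v \<in> Rd d" "nrmd d v + \<bar>a - v j\<bar> \<le> 1" "j < d"
  shows "v(j := a) \<in> Bd d"
  using assms nrmd_upd_le[OF assms(3), of v a] unfolding Bd_def Rd_def by auto

lemma no_grad_kink:
  assumes v: "v \<in> Rd d" and vn: "nrmd d v \<le> 1 - s" and s: "0 < s" and v0: "v 0 = rr n"
  shows "\<not> has_grad_at d (F p) v g"
proof
  assume hg: "has_grad_at d (F p) v g"
  define e where "e = \<eta> * cw n / 2"
  have e: "0 < e" unfolding e_def using eta_pos cw_pos[of n] by simp
  obtain dd where dd: "dd > 0" and H: "\<And>u. u \<in> Bd d \<Longrightarrow> nrmd d (vsub u v) < dd \<Longrightarrow>
      \<bar>F p u - F p v - ipd d g (vsub u v)\<bar> \<le> e * nrmd d (vsub u v)"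
    using hg e unfolding has_grad_at_def by blast
  define \<tau> where "\<tau> = min (dd / 2) s"
  have tau: "0 < \<tau>" "\<tau> < dd" "\<tau> \<le> s" unfolding \<tau>_def using dd s by auto
  define vp where "vp = v(0 := rr n + \<tau>)"
  define vm where "vm = v(0 := rr n - \<tau>)"
  have vpB: "vp \<in> Bd d" unfolding vp_def using tau vn v0 d_pos by (intro upd_Bd v) auto
  have vmB: "vm \<in> Bd d" unfolding vm_def using tau vn v0 d_pos by (intro upd_Bd v) auto
  have np: "nrmd d (vsub vp v) = \<tau>" unfolding vp_def using nrmd_upd[OF d_pos] v0 tau by simp
  have nm: "nrmd d (vsub vm v) = \<tau>" unfolding vm_def using nrmd_upd[OF d_pos] v0 tau by simp
  have ip: "ipd d g (vsub vp v) = g 0 * \<tau>" unfolding vp_def using ipd_upd[OF d_pos] v0 by simp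
  have im: "ipd d g (vsub vm v) = - (g 0 * \<tau>)" unfolding vm_def using ipd_upd[OF d_pos] v0 by simp
  have hp: "\<bar>F p vp - F p v - g 0 * \<tau>\<bar> \<le> e * \<tau>" using H[OF vpB] np ip tau by simp
  have hm: "\<bar>F p vm - F p v + g 0 * \<tau>\<bar> \<le> e * \<tau>" using H[OF vmB] nm im tau by simp
  have a1: "F p vp - F p v - g 0 * \<tau> \<le> e * \<tau>" by (rule abs_le_D1[OF hp])
  have a2: "F p vm - F p v + g 0 * \<tau> \<le> e * \<tau>" by (rule abs_le_D1[OF hm])
  have "2 * (e * \<tau>) = \<eta> * cw n * \<tau>" unfolding e_def by simp
  with a1 a2 have up: "F p vp + F p vm - 2 * F p v \<le> \<eta> * cw n * \<tau>" by linarith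
  have mid: "(\<lambda>i. 1/2 * vp i + (1 - 1/2) * vm i) = v"
    unfolding vp_def vm_def using v0 by (auto simp: fun_eq_iff field_simps)
  have Rm: "R p v \<le> 1/2 * R p vp + (1 - 1/2) * R p vm - \<mu> / 2 * (1/2) * (1 - 1/2) * sq d (vsub vp vm)"
    using R_convex[of "1/2" p vp vm] mid by simp
  have "0 \<le> \<mu> / 2 * (1/2) * (1 - 1/2) * sq d (vsub vp vm)"
    using mu_pos sq_ge0 by simp
  with Rm have R2: "0 \<le> R p vp + R p vm - 2 * R p v" by (rule half_aux)
  have k: "cw n * (2 * \<tau>) \<le> ff (rr n + \<tau>) + ff (rr n - \<tau>) - 2 * ff (rr n)"
    using ff_kink tau by simp
  have "\<eta> * (cw n * (2 * \<tau>)) \<le> \<eta> * (ff (rr n + \<tau>) + ff (rr n - \<tau>) - 2 * ff (rr n))"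
    using eta_pos by (intro mult_left_mono[OF k]) simp
  moreover have "F p vp + F p vm - 2 * F p v
      = \<eta> * (ff (rr n + \<tau>) + ff (rr n - \<tau>) - 2 * ff (rr n)) + (R p vp + R p vm - 2 * R p v)"
    unfolding F_def vp_def vm_def using v0 by (simp add: algebra_simps)
  ultimately have "\<eta> * (cw n * (2 * \<tau>)) \<le> \<eta> * cw n * \<tau>" using up R2 by linarith
  moreover have "0 < \<eta> * cw n * \<tau>" using eta_pos cw_pos[of n] tau by simp
  ultimately show False by (simp add: algebra_simps)
qed

lemma no_hess: "\<not> hessian_at d (F p) w H"
proof
  assume "hessian_at d (F p) w H"
  then obtain G r where w: "w \<in> Bd d" and r: "r > 0"
    and HG: "\<And>v. v \<in> Bd d \<Longrightarrow> nrmd d (vsub v w) < r \<Longrightarrow> has_grad_at d (F p) v (G v)"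
    unfolding hessian_at_def by blast
  define \<sigma> where "\<sigma> = min (1/2) (r / 4)"
  have sg: "0 < \<sigma>" "\<sigma> \<le> 1/2" "\<sigma> \<le> r / 4" unfolding \<sigma>_def using r by auto
  define w' where "w' = (\<lambda>i. (1 - \<sigma>) * w i)"
  have wn: "nrmd d w \<le> 1" "w \<in> Rd d" using w unfolding Bd_def by auto
  have w'n: "nrmd d w' \<le> 1 - \<sigma>"
    unfolding w'_def nrmd_scale using sg wn by (simp add: mult_left_le)
  have w'R: "w' \<in> Rd d" using wn unfolding w'_def Rd_def by auto
  have "\<bar>w' 0\<bar> \<le> 1" using coord_le_nrmd[OF d_pos, of w'] w'n sg by linarith
  then have "-1 \<le> w' 0" "w' 0 \<le> 1" by linarith+
  then have "\<exists>n. \<bar>rr n - w' 0\<bar> < \<sigma> / 4" using sg by (intro rr_dense) auto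
  then obtain n where n: "\<bar>rr n - w' 0\<bar> < \<sigma> / 4" by blast
  define v where "v = w'(0 := rr n)"
  have vR: "v \<in> Rd d" using w'R d_pos unfolding v_def Rd_def by auto
  have vn: "nrmd d v \<le> 1 - 3 * \<sigma> / 4"
    using nrmd_upd_le[OF d_pos, of w' "rr n"] w'n n unfolding v_def by linarith
  have vB: "v \<in> Bd d" using vR vn sg unfolding Bd_def by auto
  have "vsub w' w = (\<lambda>i. (- \<sigma>) * w i)" unfolding w'_def vsub_def by (auto simp: algebra_simps)
  then have "nrmd d (vsub w' w) = \<sigma> * nrmd d w" using sg by (simp only: nrmd_scale)
  then have "nrmd d (vsub w' w) \<le> \<sigma>" using wn sg by (simp add: mult_left_le)
  moreover have "nrmd d (vsub v w') = \<bar>rr n - w' 0\<bar>" unfolding v_def using nrmd_upd[OF d_pos] by simp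
  ultimately have "nrmd d (vsub v w) < r"
    using nrmd_vsub_tri[of d v w w'] n sg by linarith
  then have "has_grad_at d (F p) v (G v)" using HG vB by simp
  moreover have "\<not> has_grad_at d (F p) v (G v)"
    by (rule no_grad_kink[OF vR vn]) (use sg in \<open>auto simp: v_def\<close>)
  ultimately show False by simp
qed

end



lemma zero_from_quad:
  fixes g M :: real
  assumes M: "0 < M" and H: "\<And>t. 0 < \<bar>t\<bar> \<Longrightarrow> \<bar>t\<bar> \<le> 1/2 \<Longrightarrow> g * t \<le> M * t\<^sup>2"
  shows "g = 0"
proof (rule ccontr)
  assume g: "g \<noteq> 0"
  define t where "t = min (1/2) (\<bar>g\<bar> / (2 * M))"
  have t: "0 < t" "t \<le> 1/2" "t \<le> \<bar>g\<bar> / (2 * M)" unfolding t_def using g M by auto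
  have tM: "M * t \<le> \<bar>g\<bar> / 2" using t(3) M by (simp add: field_simps)
  show False
  proof (cases "g > 0")
    case True
    have "g * t \<le> M * t\<^sup>2" using H[of t] t by simp
    then have "g * t \<le> (M * t) * t" by (simp add: power2_eq_square algebra_simps)
    then have "g \<le> M * t" using t(1) by (rule mult_right_le_imp_le)
    then show False using tM True by simp
  next
    case False
    then have gn: "g < 0" using g by simp
    have "g * (-t) \<le> M * (-t)\<^sup>2" using H[of "-t"] t by simp
    then have "(- g) * t \<le> (M * t) * t" by (simp add: power2_eq_square algebra_simps)
    then have "- g \<le> M * t" using t(1) by (rule mult_right_le_imp_le)
    then show False using tM gn by simp
  qed
qed

lemma Vk_mono: "a \<le> b \<Longrightarrow> Vk a \<subseteq> Vk b"
  unfolding Vk_def by auto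

lemma lin_span_Vk: "S \<subseteq> Vk K \<Longrightarrow> lin_span S \<subseteq> Vk K"
  unfolding lin_span_def Vk_def by (auto intro!: sum.neutral)

lemma sq_upd: "i < d \<Longrightarrow> sq d (x(i := a)) = sq d x - (x i)\<^sup>2 + a\<^sup>2"
proof -
  assume i: "i < d"
  have "sq d (x(i := a)) = (\<Sum>k<d. (x k)\<^sup>2 + (if k = i then a\<^sup>2 - (x i)\<^sup>2 else 0))"
    unfolding sq_def by (intro sum.cong) auto
  also have "\<dots> = sq d x + (a\<^sup>2 - (x i)\<^sup>2)"
    unfolding sq_def using i by (simp add: sum.distrib)
  finally show ?thesis by simp
qed

lemma sum_two_le:
  fixes c :: real
  assumes "0 \<le> c"
  shows "(\<Sum>j<N. if j = i \<or> Suc j = i then c else 0) \<le> 2 * c"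
proof -
  have "(\<Sum>j<N. if j = i \<or> Suc j = i then c else 0) \<le> (\<Sum>j<N. (if j = i then c else 0) + (if j = i - 1 \<and> i \<noteq> 0 then c else 0))"
    using assms by (intro sum_mono) auto
  also have "\<dots> = (\<Sum>j<N. if j = i then c else 0) + (\<Sum>j<N. if j = i - 1 \<and> i \<noteq> 0 then c else 0)"
    by (rule sum.distrib)
  also have "(\<Sum>j<N. if j = i then c else 0) \<le> c" using assms by (simp add: sum.delta)
  also have "(\<Sum>j<N. if j = i - 1 \<and> i \<noteq> 0 then c else 0) \<le> c"
  proof (cases "i = 0")
    case True then show ?thesis using assms by simp
  next
    case False then show ?thesis using assms by (simp add: sum.delta)
  qed
  finally show ?thesis by simp
qed

definition closedK :: "nat \<Rightarrow> nat \<Rightarrow> nat \<Rightarrow> bool" where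
  "closedK N p K \<longleftrightarrow> 1 \<le> K \<and> \<not> ((K - 1) mod 2 = p \<and> K - 1 < N)"

context cons begin

lemma sub_tail:
  assumes cl: "closedK N p K" and wB: "w \<in> Bd d" and wV: "w \<in> Vk K" and sg: "subgrad d (F p) w g"
  shows "g \<in> Vk K"
  unfolding Vk_def
proof (intro CollectI allI impI)
  fix i assume iK: "K \<le> i"
  have gR: "g \<in> Rd d" and gin: "\<And>v. v \<in> Bd d \<Longrightarrow> F p w + ipd d g (vsub v w) \<le> F p v"
    using sg unfolding subgrad_def by auto
  have wR: "w \<in> Rd d" and wn: "nrmd d w \<le> 1" using wB unfolding Bd_def by auto
  have K1: "1 \<le> K" using cl unfolding closedK_def by simp
  have wz: "\<And>k. K \<le> k \<Longrightarrow> w k = 0" using wV unfolding Vk_def by auto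
  show "g i = 0"
  proof (cases "i < d")
    case False then show ?thesis using gR unfolding Rd_def by auto
  next
    case id: True
    have sqw: "sq d w \<le> 1" using wn nrmd_sq2[of d w] nrmd_nonneg[of d w]
      by (metis abs_of_nonneg abs_square_le_1 one_power2 power2_le_imp_le)
    have w0: "\<bar>w 0\<bar> \<le> 1" using coord_le_nrmd[OF d_pos, of w] wn by simp
    define C where "C = \<eta> + \<alpha> + \<mu> / 2 + 2 * \<alpha> / \<delta>"
    define M where "M = C + \<bar>ipd d g w\<bar>"
    have "0 \<le> 2 * \<alpha> / \<delta>" using al_pos de_pos by simp
    then have Cpos: "0 < C" unfolding C_def using eta_pos al_pos mu_pos by linarith
    have Mpos: "0 < M" unfolding M_def using Cpos by simp
    show "g i = 0"
    proof (rule zero_from_quad[OF Mpos])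
      fix t :: real assume t0: "0 < \<bar>t\<bar>" and t1: "\<bar>t\<bar> \<le> 1/2"
      define s where "s = t\<^sup>2"
      have "\<bar>t\<bar>\<^sup>2 \<le> (1/2)\<^sup>2" by (rule power_mono) (use t1 in auto)
      then have "s \<le> 1/4" unfolding s_def by (simp add: power2_eq_square)
      moreover have "0 < s" unfolding s_def using t0 by simp
      ultimately have s: "0 < s" "s \<le> 1/4" by auto
      define x where "x = (\<lambda>k. (1 - s) * w k)"
      define v where "v = x(i := t)"
      have xi: "x i = 0" unfolding x_def using wz iK by simp
      have v0: "v 0 = (1 - s) * w 0" unfolding v_def x_def using iK K1 by auto
      have sqx: "sq d x = (1 - s)\<^sup>2 * sq d w"
        unfolding x_def sq_def by (simp add: power_mult_distrib sum_distrib_left)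
      have sqv: "sq d v = (1 - s)\<^sup>2 * sq d w + t\<^sup>2"
        unfolding v_def using sq_upd[OF id, of x t] xi sqx by simp
      have vR: "v \<in> Rd d" using wR id unfolding v_def x_def Rd_def by auto
      have sqv1: "sq d v \<le> 1"
      proof -
        have "(1 - s)\<^sup>2 * sq d w \<le> (1 - s)\<^sup>2 * 1" using sqw by (intro mult_left_mono) auto
        moreover have "(1 - s)\<^sup>2 + s \<le> 1" using s by (simp add: power2_eq_square algebra_simps)
        ultimately show ?thesis using sqv unfolding s_def by simp
      qed
      have vB: "v \<in> Bd d" using vR sqv1 unfolding Bd_def nrmd_sq by simp
      have vsubvw: "vsub v w = (\<lambda>k. (- s) * w k + (if k = i then t else 0))"
        unfolding v_def x_def vsub_def using wz iK by (auto simp: fun_eq_iff algebra_simps)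
      have "ipd d g (vsub v w) = (\<Sum>k<d. (- s) * (g k * w k) + (if k = i then g i * t else 0))"
        unfolding vsubvw ipd_def by (intro sum.cong) (auto simp: algebra_simps)
      also have "\<dots> = (\<Sum>k<d. (- s) * (g k * w k)) + (\<Sum>k<d. if k = i then g i * t else 0)"
        by (rule sum.distrib)
      also have "\<dots> = - s * ipd d g w + g i * t"
        unfolding ipd_def using id by (simp add: sum_distrib_left)
      finally have ipv: "ipd d g (vsub v w) = - s * ipd d g w + g i * t" .
      have "F p w + ipd d g (vsub v w) \<le> F p v" using gin[OF vB] .
      
      have e1: "\<eta> * ff (v 0) - \<eta> * ff (w 0) \<le> \<eta> * s"
      proof -
        have "\<bar>ff (v 0) - ff (w 0)\<bar> \<le> \<bar>v 0 - w 0\<bar>" by (rule ff_lip)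
        also have "v 0 - w 0 = (- s) * w 0" unfolding v0 by (simp add: algebra_simps)
        also have "\<bar>(- s) * w 0\<bar> = s * \<bar>w 0\<bar>" using s by (simp add: abs_mult)
        also have "\<dots> \<le> s" using w0 s by (simp add: mult_left_le)
        finally have "ff (v 0) - ff (w 0) \<le> s" by simp
        then show ?thesis using eta_pos by (simp add: right_diff_distrib[symmetric])
      qed
      have e2: "- \<alpha> * v 0 + \<alpha> * w 0 \<le> \<alpha> * s"
      proof -
        have "- \<alpha> * v 0 + \<alpha> * w 0 = \<alpha> * (s * w 0)" unfolding v0 by (simp add: algebra_simps)
        also have "\<dots> \<le> \<alpha> * s" using w0 s al_pos by (intro mult_left_mono) (auto simp: abs_le_iff mult_left_le)
        finally show ?thesis .
      qed
      have e3: "\<mu> / 2 * sq d v - \<mu> / 2 * sq d w \<le> \<mu> / 2 * t\<^sup>2"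
      proof -
        have "(1 - s)\<^sup>2 * sq d w \<le> 1 * sq d w"
          using s sq_ge0[of d w] by (intro mult_right_mono) (auto simp: power2_eq_square mult_le_one)
        then have "sq d v - sq d w \<le> t\<^sup>2" using sqv by simp
        then show ?thesis using mu_pos by (simp add: right_diff_distrib[symmetric])
      qed
      have e4: "chn p N \<delta> v - chn p N \<delta> w \<le> t\<^sup>2 / \<delta>"
      proof -
        have "chn p N \<delta> v - chn p N \<delta> w
            = (\<Sum>j<N. if j mod 2 = p then phi \<delta> (v j - v (Suc j)) - phi \<delta> (w j - w (Suc j)) else 0)"
          unfolding chn_def by (simp add: sum_subtractf[symmetric] if_distrib cong: if_cong)
        also have "\<dots> \<le> (\<Sum>j<N. if j = i \<or> Suc j = i then t\<^sup>2 / (2 * \<delta>) else 0)"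
        proof (rule sum_mono)
          fix j assume jN: "j \<in> {..<N}"
          show "(if j mod 2 = p then phi \<delta> (v j - v (Suc j)) - phi \<delta> (w j - w (Suc j)) else 0)
              \<le> (if j = i \<or> Suc j = i then t\<^sup>2 / (2 * \<delta>) else 0)"
          proof (cases "j mod 2 = p")
            case False then show ?thesis using de_pos by simp
          next
            case jp: True
            show ?thesis
            proof (cases "j = i")
              case True
              then have "v j - v (Suc j) = t" "w j - w (Suc j) = 0"
                unfolding v_def x_def using wz iK by auto
              then show ?thesis using True jp phi_le[OF de_pos, of t] phi_zero de_pos by simp
            next
              case ji: False
              show ?thesis
              proof (cases "Suc j = i")
                case True
                have "j \<noteq> K - 1" using cl jp jN True iK unfolding closedK_def by auto
                then have "K \<le> j" using True iK by simp
                then have "v j - v (Suc j) = - t" "w j - w (Suc j) = 0"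
                  unfolding v_def x_def using wz True by auto
                then show ?thesis using True jp phi_le[OF de_pos, of "-t"] phi_zero de_pos by simp
              next
                case False
                have "v j - v (Suc j) = (1 - s) * (w j - w (Suc j)) + s * 0"
                  unfolding v_def x_def using ji False by (simp add: algebra_simps)
                then have "phi \<delta> (v j - v (Suc j)) \<le> (1 - s) * phi \<delta> (w j - w (Suc j)) + s * phi \<delta> 0"
                  using phi_convex[of "1 - s" \<delta> "w j - w (Suc j)" 0] s by simp
                moreover have "0 \<le> s * phi \<delta> (w j - w (Suc j))"
                  using s phi_nonneg de_pos by simp
                ultimately show ?thesis using ji False jp phi_zero de_pos
                  by (simp add: algebra_simps)
              qed
            qed
          qed
        qed
        also have "\<dots> \<le> 2 * (t\<^sup>2 / (2 * \<delta>))" by (rule sum_two_le) (use de_pos in simp)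
        finally show ?thesis using de_pos by simp
      qed
      have "F p v - F p w \<le> \<eta> * s + \<alpha> * s + \<mu> / 2 * t\<^sup>2 + 2 * \<alpha> * (t\<^sup>2 / \<delta>)"
      proof -
        have "2 * \<alpha> * (chn p N \<delta> v - chn p N \<delta> w) \<le> 2 * \<alpha> * (t\<^sup>2 / \<delta>)"
          by (rule mult_left_mono[OF e4]) (use al_pos in simp)
        moreover have "2 * \<alpha> * chn p N \<delta> v - 2 * \<alpha> * chn p N \<delta> w = 2 * \<alpha> * (chn p N \<delta> v - chn p N \<delta> w)"
          by (simp add: algebra_simps)
        ultimately have "2 * \<alpha> * chn p N \<delta> v - 2 * \<alpha> * chn p N \<delta> w \<le> 2 * \<alpha> * (t\<^sup>2 / \<delta>)" by linarith
        then show ?thesis using e1 e2 e3 unfolding F_def R_def by linarith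
      qed
      also have "\<dots> = C * t\<^sup>2" unfolding C_def s_def by (simp add: algebra_simps)
      finally have up: "F p v - F p w \<le> C * t\<^sup>2" .
      have "g i * t \<le> C * t\<^sup>2 + s * ipd d g w"
        using \<open>F p w + ipd d g (vsub v w) \<le> F p v\<close> up ipv by linarith
      also have "s * ipd d g w \<le> s * \<bar>ipd d g w\<bar>" using s by (intro mult_left_mono) auto
      finally show "g i * t \<le> M * t\<^sup>2" unfolding M_def s_def by (simp add: algebra_simps)
    qed
  qed
qed


lemma gens_Vk:
  assumes cl: "closedK N p K" and W: "W \<subseteq> Vk K"
  shows "gens d (F p) W \<subseteq> Vk K"
proof -
  have "{g. \<exists>w'\<in>W. subgrad d (F p) w' g} \<subseteq> Vk K"
  proof
    fix g assume "g \<in> {g. \<exists>w'\<in>W. subgrad d (F p) w' g}"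
    then obtain w' where "w' \<in> W" "subgrad d (F p) w' g" by blast
    then show "g \<in> Vk K" using sub_tail[OF cl] W unfolding subgrad_def by blast
  qed
  then show ?thesis unfolding gens_def using W no_hess by auto
qed

lemma chn_proj:
  assumes cl: "closedK N p K"
  shows "chn p N \<delta> (\<lambda>k. if k < K then w k else 0) \<le> chn p N \<delta> w"
  unfolding chn_def
proof (rule sum_mono)
  fix j assume jN: "j \<in> {..<N}"
  show "(if j mod 2 = p then phi \<delta> ((if j < K then w j else 0) - (if Suc j < K then w (Suc j) else 0)) else 0)
      \<le> (if j mod 2 = p then phi \<delta> (w j - w (Suc j)) else 0)"
  proof (cases "j mod 2 = p")
    case False then show ?thesis by simp
  next
    case True
    show ?thesis
    proof (cases "Suc j < K")
      case True then show ?thesis by simp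
    next
      case F: False
      have "\<not> j < K"
      proof
        assume "j < K"
        then have "j = K - 1" using F by simp
        then show False using cl True jN unfolding closedK_def by auto
      qed
      then show ?thesis using F phi_nonneg[of \<delta>] phi_zero[of \<delta>] de_pos by simp
    qed
  qed
qed

lemma add_Vk:
  assumes cl: "closedK N p K" and W: "W \<subseteq> Vk K" and va: "valid_add d (F p) W w"
  shows "w \<in> Vk K"
proof -
  obtain g \<gamma> \<nu> where sg: "subgrad d (F p) w g" and gn: "\<gamma> \<ge> 0" "\<nu> \<ge> 0" "\<gamma> + \<nu> > 0"
    and sp: "(\<lambda>i. \<gamma> * w i + \<nu> * g i) \<in> lin_span (gens d (F p) W)"
    using va unfolding valid_add_def by blast
  have "(\<lambda>i. \<gamma> * w i + \<nu> * g i) \<in> Vk K" using sp lin_span_Vk[OF gens_Vk[OF cl W]] by blast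
  then have hk: "\<And>k. K \<le> k \<Longrightarrow> \<gamma> * w k + \<nu> * g k = 0" unfolding Vk_def by auto
  have wB: "w \<in> Bd d" and gin: "\<And>v. v \<in> Bd d \<Longrightarrow> F p w + ipd d g (vsub v w) \<le> F p v"
    using sg unfolding subgrad_def by auto
  have wR: "w \<in> Rd d" and wn: "nrmd d w \<le> 1" using wB unfolding Bd_def by auto
  have K1: "1 \<le> K" using cl unfolding closedK_def by simp
  show ?thesis
    unfolding Vk_def
  proof (intro CollectI allI impI, rule ccontr)
    fix i assume iK: "K \<le> i" and wi: "w i \<noteq> 0"
    have id: "i < d" using wR wi unfolding Rd_def by (metis (mono_tags) mem_Collect_eq not_le)
    show False
    proof (cases "\<nu> = 0")
      case True
      then have "\<gamma> > 0" using gn by simp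
      then show False using hk[OF iK] True wi by simp
    next
      case False
      then have nu: "\<nu> > 0" using gn by simp
      define v where "v = (\<lambda>k. if k < K then w k else 0)"
      have vR: "v \<in> Rd d" using wR unfolding v_def Rd_def by auto
      have sqlt: "sq d v < sq d w"
        unfolding sq_def v_def
      proof (rule sum_strict_mono_ex1)
        show "finite {..<d}" by simp
        show "\<forall>k\<in>{..<d}. (if k < K then w k else 0)\<^sup>2 \<le> (w k)\<^sup>2" by auto
        show "\<exists>k\<in>{..<d}. (if k < K then w k else 0)\<^sup>2 < (w k)\<^sup>2"
          using id iK wi by (intro bexI[of _ i]) auto
      qed
      have "nrmd d v \<le> nrmd d w" unfolding nrmd_sq using sqlt by simp
      then have vB: "v \<in> Bd d" using vR wn unfolding Bd_def by auto
      have ip: "0 \<le> ipd d g (vsub v w)"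
        unfolding ipd_def
      proof (rule sum_nonneg)
        fix k assume "k \<in> {..<d}"
        show "0 \<le> g k * vsub v w k"
        proof (cases "k < K")
          case True then show ?thesis unfolding v_def vsub_def by simp
        next
          case False
          then have e: "\<nu> * g k = - \<gamma> * w k" using hk[of k] by simp
          have "\<nu> * (g k * vsub v w k) = - (\<nu> * g k) * w k"
            unfolding v_def vsub_def using False by (simp add: algebra_simps)
          also have "\<dots> = \<gamma> * (w k)\<^sup>2" unfolding e by (simp add: power2_eq_square)
          also have "\<dots> \<ge> 0" using gn by simp
          finally have "0 \<le> \<nu> * (g k * vsub v w k)" .
          then show ?thesis using nu by (simp add: zero_le_mult_iff)
        qed
      qed
      have le: "F p w \<le> F p v" using gin[OF vB] ip by linarith
      have v0: "v 0 = w 0" unfolding v_def using K1 by simp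
      have c: "chn p N \<delta> v \<le> chn p N \<delta> w" unfolding v_def by (rule chn_proj[OF cl])
      have "\<mu> / 2 * sq d v < \<mu> / 2 * sq d w" using sqlt mu_pos by simp
      moreover have "2 * \<alpha> * chn p N \<delta> v \<le> 2 * \<alpha> * chn p N \<delta> w"
        using c al_pos by (intro mult_left_mono) auto
      ultimately have "F p v < F p w" unfolding F_def R_def v0 by linarith
      then show False using le by simp
    qed
  qed
qed

lemma local_ext_Vk:
  assumes cl: "closedK N p K" and W: "W \<subseteq> Vk K" and le: "local_ext d (F p) W W'"
  shows "W' \<subseteq> Vk K"
proof -
  obtain ws where W': "W' = W \<union> set ws"
    and va: "\<And>k. k < length ws \<Longrightarrow> valid_add d (F p) (W \<union> set (take k ws)) (ws ! k)"
    using le unfolding local_ext_def by blast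
  have "k \<le> length ws \<Longrightarrow> set (take k ws) \<subseteq> Vk K" for k
  proof (induction k)
    case 0 then show ?case by simp
  next
    case (Suc k)
    then have kl: "k < length ws" by simp
    have "W \<union> set (take k ws) \<subseteq> Vk K" using Suc W by simp
    then have "ws ! k \<in> Vk K" using add_Vk[OF cl _ va[OF kl]] by blast
    then show ?case using Suc kl by (simp add: take_Suc_conv_app_nth)
  qed
  from this[of "length ws"] show ?thesis using W' W by simp
qed

lemma run_Vk:
  assumes run: "is_run d m Fs T Ws" and Fs: "\<forall>j<m. \<exists>p<2. Fs j = F p"
  shows "t \<le> T \<Longrightarrow> j < m \<Longrightarrow> Ws t j \<subseteq> Vk (Suc t)"
proof (induction t arbitrary: j)
  case 0
  then have "Ws 0 j = {(\<lambda>_. 0)}" using run unfolding is_run_def by auto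
  then show ?case unfolding Vk_def by auto
next
  case (Suc t)
  then have tT: "t < T" by simp
  obtain V where lv: "\<forall>j<m. local_ext d (Fs j) (Ws t j) (V j)"
    and ws: "\<forall>j<m. Ws (Suc t) j = (\<Union>i<m. V i)"
    using run tT unfolding is_run_def by blast
  have "V i \<subseteq> Vk (Suc (Suc t))" if im: "i < m" for i
  proof -
    obtain p where p: "p < 2" "Fs i = F p" using Fs im by blast
    define K where "K = (if t mod 2 = p then Suc (Suc t) else Suc t)"
    have cl: "closedK N p K"
      unfolding closedK_def K_def using p(1) by (auto simp: mod_Suc split: if_splits)
    have "Ws t i \<subseteq> Vk (Suc t)" using Suc.IH[OF _ im] tT by simp
    also have "\<dots> \<subseteq> Vk K" unfolding K_def by (intro Vk_mono) auto
    finally have "V i \<subseteq> Vk K" using local_ext_Vk[OF cl] lv im p(2) by metis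
    also have "\<dots> \<subseteq> Vk (Suc (Suc t))" unfolding K_def by (intro Vk_mono) auto
    finally show ?thesis .
  qed
  then show ?case using ws Suc.prems by auto
qed

end



lemma telescope: "\<bar>w 0 - w N\<bar> \<le> (\<Sum>i<N. \<bar>w i - w (Suc i)\<bar>)" for w :: "nat \<Rightarrow> real"
proof (induction N)
  case 0 then show ?case by simp
next
  case (Suc N)
  have "\<bar>w 0 - w (Suc N)\<bar> \<le> \<bar>w 0 - w N\<bar> + \<bar>w N - w (Suc N)\<bar>" by linarith
  then show ?case using Suc by simp
qed

context cons begin

definition avg :: "vec \<Rightarrow> real" where "avg w = (F 0 w + F 1 w) / 2"

lemma avg_eq: "avg w = \<eta> * ff (w 0) + \<mu> / 2 * sq d w - \<alpha> * w 0 + \<alpha> * (\<Sum>i<N. phi \<delta> (w i - w (Suc i)))"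
proof -
  have h: "chn 0 N \<delta> w + chn 1 N \<delta> w = (\<Sum>i<N. phi \<delta> (w i - w (Suc i)))"
    unfolding chn_def sum.distrib[symmetric] by (intro sum.cong) auto
  show ?thesis unfolding avg_def F_def R_def h[symmetric] by (simp add: field_simps)
qed

lemma avg_lower:
  assumes "w N = 0"
  shows "\<eta> * ff (w 0) - \<alpha> * (real N * \<delta>) \<le> avg w"
proof -
  have "(\<Sum>i<N. \<bar>w i - w (Suc i)\<bar> - \<delta>) \<le> (\<Sum>i<N. phi \<delta> (w i - w (Suc i)))"
    by (intro sum_mono phi_ge)
  then have "\<bar>w 0\<bar> - real N * \<delta> \<le> (\<Sum>i<N. phi \<delta> (w i - w (Suc i)))"
    using telescope[of w N] assms by (simp add: sum_subtractf)
  then have "\<alpha> * (\<bar>w 0\<bar> - real N * \<delta>) \<le> \<alpha> * (\<Sum>i<N. phi \<delta> (w i - w (Suc i)))"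
    using al_pos by (intro mult_left_mono) auto
  moreover have "0 \<le> \<mu> / 2 * sq d w" using mu_pos sq_ge0 by simp
  moreover have "\<alpha> * w 0 \<le> \<alpha> * \<bar>w 0\<bar>" using al_pos by (intro mult_left_mono) auto
  ultimately show ?thesis unfolding avg_eq by (simp add: algebra_simps)
qed

definition uu :: "real \<Rightarrow> vec" where "uu c = (\<lambda>i. if i \<le> N then c else 0)"

lemma sq_uu: "sq d (uu c) = (real N + 1) * c\<^sup>2"
proof -
  have "sq d (uu c) = (\<Sum>i\<in>{..<d}. if i \<le> N then c\<^sup>2 else 0)"
    unfolding sq_def uu_def by (intro sum.cong) auto
  also have "\<dots> = (\<Sum>i\<in>{i\<in>{..<d}. i \<le> N}. c\<^sup>2)"
    by (rule sum.inter_filter[symmetric]) simp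
  also have "{i\<in>{..<d}. i \<le> N} = {..N}" using Nd by auto
  finally show ?thesis by simp
qed

lemma uu_Bd: "(real N + 1) * c\<^sup>2 \<le> 1 \<Longrightarrow> uu c \<in> Bd d"
proof -
  assume a: "(real N + 1) * c\<^sup>2 \<le> 1"
  have "nrmd d (uu c) \<le> 1" unfolding nrmd_sq sq_uu using a by simp
  moreover have "uu c \<in> Rd d" unfolding Rd_def uu_def using Nd by auto
  ultimately show ?thesis unfolding Bd_def by simp
qed

lemma avg_uu: "avg (uu c) = \<eta> * ff c + \<mu> / 2 * ((real N + 1) * c\<^sup>2) - \<alpha> * c"
proof -
  have "(\<Sum>i<N. phi \<delta> (uu c i - uu c (Suc i))) = 0"
    unfolding uu_def using phi_zero de_pos by (intro sum.neutral) auto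
  then show ?thesis unfolding avg_eq sq_uu by (simp add: uu_def)
qed

lemma gap:
  assumes wB: "w \<in> Bd d" and wN: "w N = 0" and c: "(real N + 1) * c\<^sup>2 \<le> 1"
  shows "\<alpha> * c - \<mu> / 2 * ((real N + 1) * c\<^sup>2) - 2 * \<eta> - \<alpha> * (real N * \<delta>) \<le> avg w - avg (uu c)"
proof -
  have "1 * c\<^sup>2 \<le> (real N + 1) * c\<^sup>2" by (intro mult_right_mono) auto
  then have c1: "c\<^sup>2 \<le> 1" using c by simp
  then have "\<bar>c\<bar> \<le> 1" by (simp add: abs_square_le_1)
  moreover have "\<bar>w 0\<bar> \<le> 1" using coord_le_nrmd[OF d_pos, of w] wB unfolding Bd_def by auto
  ultimately have "\<bar>ff (w 0) - ff c\<bar> \<le> 2" using ff_lip[of "w 0" c] by linarith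
  then have "-2 \<le> ff (w 0) - ff c" by linarith
  then have "\<eta> * (-2) \<le> \<eta> * (ff (w 0) - ff c)" using eta_pos by (intro mult_left_mono) auto
  then show ?thesis using avg_lower[of w, OF wN] unfolding avg_uu by (simp add: algebra_simps)
qed

end



lemma num_ad:
  fixes \<alpha> \<epsilon> :: real
  assumes "0 < \<alpha>" "\<alpha> \<le> 1" "0 < \<epsilon>"
  shows "\<alpha> * (real N * (\<epsilon> / (10 * (real N + 1)))) \<le> \<epsilon> / 10"
proof -
  have "real N * (\<epsilon> / (10 * (real N + 1))) = (\<epsilon> / 10) * (real N / (real N + 1))" by (simp add: field_simps)
  also have "\<dots> \<le> \<epsilon> / 10" using assms by (intro mult_left_le) auto
  finally have x: "real N * (\<epsilon> / (10 * (real N + 1))) \<le> \<epsilon> / 10" .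
  have "0 \<le> real N * (\<epsilon> / (10 * (real N + 1)))" using assms by simp
  then have "\<alpha> * (real N * (\<epsilon> / (10 * (real N + 1)))) \<le> real N * (\<epsilon> / (10 * (real N + 1)))"
    using assms by (intro mult_left_le_one_le) auto
  with x show ?thesis by linarith
qed

lemma num_gap0:
  fixes P \<epsilon> s X :: real
  assumes P: "0 < P" and e: "8 * \<epsilon> * P < 1" "0 < \<epsilon>" and s: "s * s = P" "0 < s"
    and X: "X \<le> \<epsilon> / 10"
  shows "\<epsilon> < 2 / (5 * s) * (1 / s) - \<epsilon> / 4 / 2 * (P * (1 / s)\<^sup>2) - 2 * (\<epsilon> / 32) - X"
proof -
  have a: "2 / (5 * s) * (1 / s) = 2 / (5 * P)" using s by (simp add: field_simps)
  have b: "P * (1 / s)\<^sup>2 = 1" using s P by (simp add: field_simps power2_eq_square)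
  have "16 * \<epsilon> / 5 < 2 / (5 * P)" using e P by (simp add: field_simps)
  then show ?thesis unfolding a b using X e by linarith
qed

lemma num_gap1:
  fixes P \<epsilon> s X lam \<alpha> c :: real
  assumes P: "0 < P" and lam: "0 < lam" and e: "16 * lam * \<epsilon> * P\<^sup>2 < 1" "0 < \<epsilon>"
    and s: "s * s = P" "0 < s" and X: "X \<le> \<epsilon> / 10"
    and al: "\<alpha> = 2 / (5 * s)" and c: "c = \<alpha> / (lam * P)"
  shows "\<epsilon> < \<alpha> * c - lam / 2 * (P * c\<^sup>2) - 2 * (\<epsilon> / 32) - X"
proof -
  have a2: "\<alpha> * \<alpha> = 4 / (25 * P)" unfolding al using s by (simp add: field_simps)
  have "\<alpha> * c - lam / 2 * (P * c\<^sup>2) = \<alpha> * \<alpha> / (2 * lam * P)"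
    unfolding c using lam P by (simp add: field_simps power2_eq_square)
  also have "\<dots> = 2 / (25 * lam * P\<^sup>2)" unfolding a2 using lam P by (simp add: field_simps power2_eq_square)
  finally have m: "\<alpha> * c - lam / 2 * (P * c\<^sup>2) = 2 / (25 * lam * P\<^sup>2)" .
  have "32 * \<epsilon> / 25 < 2 / (25 * lam * P\<^sup>2)" using e P lam by (simp add: field_simps)
  then show ?thesis using m X e by linarith
qed

lemma num_c1:
  fixes P s lam \<alpha> c :: real
  assumes P: "0 < P" and lam: "0 < lam" and lp: "1/2 \<le> lam * P"
    and s: "s * s = P" "0 < s" and al: "\<alpha> = 2 / (5 * s)" and c: "c = \<alpha> / (lam * P)"
  shows "P * c\<^sup>2 \<le> 1"
proof -
  have "P * c\<^sup>2 = 4 / (25 * (lam * P)\<^sup>2)"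
    unfolding c al using s P lam by (simp add: field_simps power2_eq_square)
  also have "\<dots> \<le> 4 / (25 * (1/2)\<^sup>2)"
  proof (rule divide_left_mono)
    show "25 * (1/2)\<^sup>2 \<le> 25 * (lam * P)\<^sup>2" using lp by (intro mult_left_mono power_mono) auto
    show "0 < 25 * (lam * P)\<^sup>2 * (25 * (1/2)\<^sup>2)" using lam P by simp
  qed simp
  also have "4 / (25 * (1/2::real)\<^sup>2) \<le> 1" by (simp add: power2_eq_square)
  finally show ?thesis .
qed


theorem theorem2:
  fixes m j0 :: nat and alg :: algorithm and lam :: real
  assumes "even m" and "valid_algorithm m j0 alg" and "lam \<ge> 0"
  shows "\<exists>\<epsilon>0>0. \<forall>\<epsilon>::real. 0 < \<epsilon> \<and> \<epsilon> < \<epsilon>0 \<longrightarrow>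
    (\<exists>D::nat. \<forall>d\<ge>D. \<exists>F1 F2 :: vec \<Rightarrow> real.
       strongly_convex_on_ball d lam F1 \<and> strongly_convex_on_ball d lam F2 \<and>
       lipschitz_on_ball d (1 + lam) F1 \<and> lipschitz_on_ball d (1 + lam) F2 \<and>
       (\<forall>S T wstar. S \<subseteq> {..<m} \<and> card S = m div 2 \<and>
          wstar \<in> Bd d \<and> (\<forall>w\<in>Bd d. (F1 wstar + F2 wstar) / 2 \<le> (F1 w + F2 w) / 2) \<and>
          snd (alg d (\<lambda>j. if j \<in> S then F1 else F2) T) \<in> Bd d \<and>
          (F1 (snd (alg d (\<lambda>j. if j \<in> S then F1 else F2) T))
             + F2 (snd (alg d (\<lambda>j. if j \<in> S then F1 else F2) T))) / 2
            - (F1 wstar + F2 wstar) / 2 \<le> \<epsilon>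
          \<longrightarrow> (if lam = 0 then real T \<ge> 1 / (8 * \<epsilon>) - 2
               else real T \<ge> sqrt (1 / (16 * lam * \<epsilon>)) - 2)))"
proof -
  have lam0: "0 \<le> lam" using assms(3) .
  have VA: "j0 < m" "\<And>d Fs T. is_run d m Fs T (fst (alg d Fs T))"
    "\<And>d Fs T. snd (alg d Fs T) \<in> lin_span (fst (alg d Fs T) T j0)"
    using assms(2) unfolding valid_algorithm_def by auto
  define thr :: "real \<Rightarrow> real" where
    "thr \<epsilon> = (if lam = 0 then 1 / (8 * \<epsilon>) else sqrt (1 / (16 * lam * \<epsilon>)))" for \<epsilon>
  define e0 :: real where
    "e0 = (if lam = 0 then 1/80 else min (1/80) (min (1 / (1600 * lam)) (lam / 16)))"
  have e0pos: "0 < e0" unfolding e0_def using lam0 by auto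
  show ?thesis
  proof (intro exI[of _ e0] conjI e0pos allI impI)
    fix \<epsilon> :: real
    assume "0 < \<epsilon> \<and> \<epsilon> < e0"
    then have ep: "0 < \<epsilon>" and ee: "\<epsilon> < e0" by auto
    have e80: "\<epsilon> < 1/80" using ee unfolding e0_def by (auto split: if_splits)
    have thr10: "10 < thr \<epsilon>"
    proof (cases "lam = 0")
      case True
      then show ?thesis unfolding thr_def using ep e80 by (simp add: field_simps)
    next
      case False
      then have lp: "0 < lam" using lam0 by simp
      have "\<epsilon> < 1 / (1600 * lam)" using ee False unfolding e0_def by simp
      then have "16 * lam * \<epsilon> < 1/100" using lp ep by (simp add: field_simps)
      then have "100 < 1 / (16 * lam * \<epsilon>)" using lp ep by (simp add: field_simps)
      then have "sqrt 100 < sqrt (1 / (16 * lam * \<epsilon>))" by (rule real_sqrt_less_mono)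
      then show ?thesis unfolding thr_def using False by simp
    qed
    define N where "N = nat \<lceil>thr \<epsilon>\<rceil> - 2"
    have ceil: "thr \<epsilon> \<le> of_int \<lceil>thr \<epsilon>\<rceil>" "of_int \<lceil>thr \<epsilon>\<rceil> < thr \<epsilon> + 1"
      using ceiling_correct[of "thr \<epsilon>"] by linarith+
    have c11: "11 \<le> \<lceil>thr \<epsilon>\<rceil>" using ceil thr10 by linarith
    obtain k where k: "\<lceil>thr \<epsilon>\<rceil> = int k" using c11 by (metis nonneg_int_cases order_trans zero_le_numeral)
    have k11: "11 \<le> k" using c11 k by simp
    have Nk: "N = k - 2" unfolding N_def k by simp
    have rN: "real N = of_int \<lceil>thr \<epsilon>\<rceil> - 2" unfolding Nk k using k11 by (simp add: of_nat_diff)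
    have N9: "9 \<le> N" using rN c11 by linarith
    have Nthr1: "real N + 1 < thr \<epsilon>" using rN ceil by linarith
    have Nthr2: "thr \<epsilon> \<le> real N + 2" using rN ceil by linarith
    define P where "P = real N + 1"
    have P10: "10 \<le> P" unfolding P_def using N9 by simp
    define s where "s = sqrt P"
    have ss: "s * s = P" "0 < s" unfolding s_def using P10 by simp_all
    have s3: "3 \<le> s" unfolding s_def using P10 real_sqrt_le_mono[of 9 P] by simp
    define \<alpha> where "\<alpha> = 2 / (5 * s)"
    define \<mu> where "\<mu> = (if lam = 0 then \<epsilon> / 4 else lam)"
    define \<eta> where "\<eta> = \<epsilon> / 32"
    define \<delta> where "\<delta> = \<epsilon> / (10 * (real N + 1))"
    define c where "c = (if lam = 0 then 1 / s else \<alpha> / (lam * P))"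
    have al: "0 < \<alpha>" "\<alpha> \<le> 2/15" unfolding \<alpha>_def using ss s3 by (simp_all add: field_simps)
    have mu: "0 < \<mu>" "lam \<le> \<mu>" "\<mu> \<le> lam + \<epsilon> / 4" unfolding \<mu>_def using ep lam0 by auto
    show "\<exists>D::nat. \<forall>d\<ge>D. \<exists>F1 F2 :: vec \<Rightarrow> real.
       strongly_convex_on_ball d lam F1 \<and> strongly_convex_on_ball d lam F2 \<and>
       lipschitz_on_ball d (1 + lam) F1 \<and> lipschitz_on_ball d (1 + lam) F2 \<and>
       (\<forall>S T wstar. S \<subseteq> {..<m} \<and> card S = m div 2 \<and>
          wstar \<in> Bd d \<and> (\<forall>w\<in>Bd d. (F1 wstar + F2 wstar) / 2 \<le> (F1 w + F2 w) / 2) \<and>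
          snd (alg d (\<lambda>j. if j \<in> S then F1 else F2) T) \<in> Bd d \<and>
          (F1 (snd (alg d (\<lambda>j. if j \<in> S then F1 else F2) T))
             + F2 (snd (alg d (\<lambda>j. if j \<in> S then F1 else F2) T))) / 2
            - (F1 wstar + F2 wstar) / 2 \<le> \<epsilon>
          \<longrightarrow> (if lam = 0 then real T \<ge> 1 / (8 * \<epsilon>) - 2
               else real T \<ge> sqrt (1 / (16 * lam * \<epsilon>)) - 2))"
    proof (intro exI[of _ "Suc N"] allI impI)
      fix d :: nat assume dN: "Suc N \<le> d"
      interpret C: cons d N \<mu> \<alpha> \<delta> \<eta>
        by unfold_locales (use N9 dN mu al ep in \<open>auto simp: \<eta>_def \<delta>_def\<close>)
      have lipc: "\<eta> + \<mu> + \<alpha> + 2 * \<alpha> * sqrt (real N + 1) \<le> 1 + lam"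
      proof -
        have "2 * \<alpha> * sqrt (real N + 1) = 4 / 5" unfolding \<alpha>_def s_def P_def using ss
          unfolding s_def P_def by (simp add: field_simps)
        then show ?thesis using al mu e80 unfolding \<eta>_def by linarith
      qed
      have gapc: "(real N + 1) * c\<^sup>2 \<le> 1 \<and> \<epsilon> < \<alpha> * c - \<mu> / 2 * ((real N + 1) * c\<^sup>2) - 2 * \<eta> - \<alpha> * (real N * \<delta>)"
      proof -
        have X: "\<alpha> * (real N * \<delta>) \<le> \<epsilon> / 10" unfolding \<delta>_def using al ep by (intro num_ad) auto
        show ?thesis
        proof (cases "lam = 0")
          case True
          have "8 * \<epsilon> * P < 1" using Nthr1 True ep unfolding thr_def P_def by (simp add: field_simps)
          then have "\<epsilon> < 2 / (5 * s) * (1 / s) - \<epsilon> / 4 / 2 * (P * (1 / s)\<^sup>2) - 2 * (\<epsilon> / 32) - \<alpha> * (real N * \<delta>)"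
            using P10 ep ss X by (intro num_gap0) auto
          moreover have "P * (1 / s)\<^sup>2 \<le> 1" using ss P10 by (simp add: field_simps power2_eq_square)
          ultimately show ?thesis unfolding c_def \<mu>_def \<eta>_def \<alpha>_def P_def using True by simp
        next
          case False
          then have lp: "0 < lam" using lam0 by simp
          have t: "thr \<epsilon> = sqrt (1 / (16 * lam * \<epsilon>))" unfolding thr_def using False by simp
          have "P\<^sup>2 < (thr \<epsilon>)\<^sup>2" using Nthr1 P10 unfolding P_def by (intro power_strict_mono) auto
          also have "(thr \<epsilon>)\<^sup>2 = 1 / (16 * lam * \<epsilon>)" unfolding t using lp ep by simp
          finally have "16 * lam * \<epsilon> * P\<^sup>2 < 1" using lp ep by (simp add: field_simps)
          then have g: "\<epsilon> < \<alpha> * c - lam / 2 * (P * c\<^sup>2) - 2 * (\<epsilon> / 32) - \<alpha> * (real N * \<delta>)"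
            using P10 lp ep ss X unfolding c_def using False by (intro num_gap1[where s = s]) (auto simp: \<alpha>_def)
          have "\<epsilon> \<le> lam / 16" using ee False unfolding e0_def by simp
          then have "1 \<le> lam / (16 * \<epsilon>)" using ep by (simp add: field_simps)
          also have "lam / (16 * \<epsilon>) = (lam * thr \<epsilon>)\<^sup>2"
            unfolding t using lp ep by (simp add: power_mult_distrib power2_eq_square field_simps)
          finally have "1 \<le> (lam * thr \<epsilon>)\<^sup>2" .
          moreover have "0 \<le> lam * thr \<epsilon>" using lp thr10 by simp
          ultimately have lt1: "1 \<le> lam * thr \<epsilon>" using power2_le_imp_le[of 1 "lam * thr \<epsilon>"] by simp
          have "lam * thr \<epsilon> \<le> lam * (2 * P)" using Nthr2 lp unfolding P_def by (intro mult_left_mono) auto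
          then have "1/2 \<le> lam * P" using lt1 by linarith
          then have "P * c\<^sup>2 \<le> 1" using P10 lp ss unfolding c_def using False
            by (intro num_c1[where s = s and \<alpha> = \<alpha>]) (auto simp: \<alpha>_def)
          then show ?thesis using g unfolding \<mu>_def \<eta>_def P_def using False by simp
        qed
      qed
      show "\<exists>F1 F2 :: vec \<Rightarrow> real.
       strongly_convex_on_ball d lam F1 \<and> strongly_convex_on_ball d lam F2 \<and>
       lipschitz_on_ball d (1 + lam) F1 \<and> lipschitz_on_ball d (1 + lam) F2 \<and>
       (\<forall>S T wstar. S \<subseteq> {..<m} \<and> card S = m div 2 \<and>
          wstar \<in> Bd d \<and> (\<forall>w\<in>Bd d. (F1 wstar + F2 wstar) / 2 \<le> (F1 w + F2 w) / 2) \<and>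
          snd (alg d (\<lambda>j. if j \<in> S then F1 else F2) T) \<in> Bd d \<and>
          (F1 (snd (alg d (\<lambda>j. if j \<in> S then F1 else F2) T))
             + F2 (snd (alg d (\<lambda>j. if j \<in> S then F1 else F2) T))) / 2
            - (F1 wstar + F2 wstar) / 2 \<le> \<epsilon>
          \<longrightarrow> (if lam = 0 then real T \<ge> 1 / (8 * \<epsilon>) - 2
               else real T \<ge> sqrt (1 / (16 * lam * \<epsilon>)) - 2))"
      proof (rule exI[of _ "C.F 0"], rule exI[of _ "C.F 1"], intro conjI allI impI)
        show "strongly_convex_on_ball d lam (C.F 0)" using C.F_sc lam0 mu by auto
        show "strongly_convex_on_ball d lam (C.F 1)" using C.F_sc lam0 mu by auto
        show "lipschitz_on_ball d (1 + lam) (C.F 0)" using lip_mono[OF lipc C.F_lip] by auto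
        show "lipschitz_on_ball d (1 + lam) (C.F 1)" using lip_mono[OF lipc C.F_lip] by auto
        fix S T wstar
        assume H: "S \<subseteq> {..<m} \<and> card S = m div 2 \<and>
          wstar \<in> Bd d \<and> (\<forall>w\<in>Bd d. (C.F 0 wstar + C.F 1 wstar) / 2 \<le> (C.F 0 w + C.F 1 w) / 2) \<and>
          snd (alg d (\<lambda>j. if j \<in> S then C.F 0 else C.F 1) T) \<in> Bd d \<and>
          (C.F 0 (snd (alg d (\<lambda>j. if j \<in> S then C.F 0 else C.F 1) T))
             + C.F 1 (snd (alg d (\<lambda>j. if j \<in> S then C.F 0 else C.F 1) T))) / 2
            - (C.F 0 wstar + C.F 1 wstar) / 2 \<le> \<epsilon>"
        define Fs where "Fs = (\<lambda>j. if j \<in> S then C.F 0 else C.F 1)"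
        define out where "out = snd (alg d Fs T)"
        have outB: "out \<in> Bd d" and wmin: "\<And>w. w \<in> Bd d \<Longrightarrow> C.avg wstar \<le> C.avg w"
          and close: "C.avg out - C.avg wstar \<le> \<epsilon>"
          using H unfolding out_def Fs_def C.avg_def by auto
        have NT: "N \<le> T"
        proof (rule ccontr)
          assume "\<not> N \<le> T"
          then have TN: "Suc T \<le> N" by simp
          have Fs2: "\<forall>j<m. \<exists>p<2. Fs j = C.F p"
          proof (intro allI impI)
            fix j assume "j < m"
            show "\<exists>p<2. Fs j = C.F p"
            proof (cases "j \<in> S")
              case True then show ?thesis unfolding Fs_def by (intro exI[of _ 0]) simp
            next
              case False then show ?thesis unfolding Fs_def by (intro exI[of _ 1]) simp
            qed
          qed
          have "fst (alg d Fs T) T j0 \<subseteq> Vk (Suc T)"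
            using C.run_Vk[OF VA(2)[of d Fs T] Fs2, of T j0] VA(1) by simp
          then have "out \<in> Vk (Suc T)" unfolding out_def using VA(3) lin_span_Vk by blast
          then have oN: "out N = 0" using TN unfolding Vk_def by auto
          have cB: "C.uu c \<in> Bd d" using gapc by (intro C.uu_Bd) simp
          have "\<epsilon> < C.avg out - C.avg (C.uu c)" using C.gap[OF outB oN, of c] gapc by linarith
          also have "\<dots> \<le> C.avg out - C.avg wstar" using wmin[OF cB] by simp
          finally show False using close by simp
        qed
        have "thr \<epsilon> - 2 \<le> real T" using Nthr2 NT by simp
        then show "if lam = 0 then real T \<ge> 1 / (8 * \<epsilon>) - 2 else real T \<ge> sqrt (1 / (16 * lam * \<epsilon>)) - 2"
          unfolding thr_def by (auto split: if_splits)
      qed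
    qed
  qed
qed


end
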